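(* Let $\mathbb{K}$ be a totally ordered field and $\kappa$ an uncountable cardinal. Then $\mathbb{K}$ is algebraically $\kappa$-saturated if and only if $\mathbb{K}$ is both Cantor $\kappa$-complete and algebraically $\kappa$-saturated at infinity.
   Context: $\mathbb{K}$ is algebraically $\kappa$-saturated if every family of fewer than $\kappa$ open intervals $(a_\gamma,b_\gamma)$ in $\mathbb{K}$ with the finite intersection property has non-empty intersection. $\mathbb{K}$ is algebraically $\kappa$-saturated at infinity if every subset of $\mathbb{K}$ of cardinality less than $\kappa$ is bounded. $\mathbb{K}$ is Cantor $\kappa$-complete if every family of fewer than $\kappa$ closed bounded intervals $[a_\gamma,b_\gamma]$ in $\mathbb{K}$ with the finite intersection property has non-empty intersection. *)

theory Defs
  imports Main
begin

text \<open>Cardinals are represented as cardinal orders (BNF_Cardinal_Order_Relation);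
  a set A has fewer than kappa elements iff card_of A <o kappa.
  A family of intervals is represented by the set of its endpoint pairs.\<close>

definition open_fip :: "('a::linorder \<times> 'a) set \<Rightarrow> bool" where
  "open_fip F \<longleftrightarrow> (\<forall>G \<subseteq> F. finite G \<longrightarrow> (\<exists>x. \<forall>(a,b)\<in>G. x \<in> {a<..<b}))"

definition closed_fip :: "('a::linorder \<times> 'a) set \<Rightarrow> bool" where
  "closed_fip F \<longleftrightarrow> (\<forall>G \<subseteq> F. finite G \<longrightarrow> (\<exists>x. \<forall>(a,b)\<in>G. x \<in> {a..b}))"

definition alg_saturated :: "'b rel \<Rightarrow> 'a::linordered_field itself \<Rightarrow> bool" where
  "alg_saturated \<kappa> _ \<longleftrightarrow>
     (\<forall>F :: ('a \<times> 'a) set. (card_of F, \<kappa>) \<in> ordLess \<longrightarrow> open_fip F \<longrightarrow>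
        (\<exists>x. \<forall>(a,b)\<in>F. x \<in> {a<..<b}))"

definition alg_saturated_at_infinity :: "'b rel \<Rightarrow> 'a::linordered_field itself \<Rightarrow> bool" where
  "alg_saturated_at_infinity \<kappa> _ \<longleftrightarrow>
     (\<forall>A :: 'a set. (card_of A, \<kappa>) \<in> ordLess \<longrightarrow> bdd_above A \<and> bdd_below A)"

definition cantor_complete :: "'b rel \<Rightarrow> 'a::linordered_field itself \<Rightarrow> bool" where
  "cantor_complete \<kappa> _ \<longleftrightarrow>
     (\<forall>F :: ('a \<times> 'a) set. (card_of F, \<kappa>) \<in> ordLess \<longrightarrow> closed_fip F \<longrightarrow>
        (\<exists>x. \<forall>(a,b)\<in>F. x \<in> {a..b}))"

end

theory Submission
  imports Defs
begin

unbundle cardinal_syntax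

lemma fin_less:
  assumes "(natLeq, \<kappa>) \<in> ordLess" "finite A"
  shows "( |A|, \<kappa>) \<in> ordLess"
proof -
  have W: "Well_order natLeq" by (rule natLeq_Well_order)
  have W2: "Well_order (card_of A)" by (rule card_of_Well_order)
  have F1: "finite (Field (card_of A))" unfolding Field_card_of by (rule assms(2))
  have F2: "\<not> finite (Field natLeq)" unfolding Field_natLeq by (rule infinite_UNIV_nat)
  have "|A| <o natLeq" by (rule finite_ordLess_infinite[OF W2 W F1 F2])
  thus ?thesis using assms(1) by (rule ordLess_transitive)
qed

lemma times_less:
  assumes "(natLeq, \<kappa>) \<in> ordLess" "( |A|, \<kappa>) \<in> ordLess"
  shows "( |A \<times> A|, \<kappa>) \<in> ordLess"
proof (cases "finite A")
  case True
  hence "finite (A \<times> A)" by simp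
  thus ?thesis by (rule fin_less[OF assms(1)])
next
  case False
  hence "|A \<times> A| =o |A|" by (rule card_of_Times_same_infinite)
  thus ?thesis using assms(2) by (rule ordIso_ordLess_trans)
qed

lemma image_less:
  assumes "( |A|, \<kappa>) \<in> ordLess"
  shows "( |f ` A|, \<kappa>) \<in> ordLess"
  using card_of_image assms by (rule ordLeq_ordLess_trans)

lemma sat_bdd_above:
  fixes A :: "'a::linordered_field set"
  assumes sat: "alg_saturated \<kappa> TYPE('a)" and card: "( |A|, \<kappa>) \<in> ordLess"
  shows "bdd_above A"
proof (cases "{a\<in>A. 0 < a} = {}")
  case True
  hence "\<forall>a\<in>A. a \<le> 0" by force
  thus ?thesis unfolding bdd_above_def by blast
next
  case False
  define P where "P = {a\<in>A. 0 < a}"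
  define F where "F = (\<lambda>a. (0::'a, inverse a)) ` P"
  have "|P| \<le>o |A|" unfolding P_def by (rule card_of_mono1) auto
  hence cP: "( |P|, \<kappa>) \<in> ordLess" using card ordLeq_ordLess_trans by blast
  have cF: "( |F|, \<kappa>) \<in> ordLess" unfolding F_def by (rule image_less[OF cP])
  have Fpos: "\<forall>(a,b)\<in>F. a = 0 \<and> 0 < b" unfolding F_def P_def by auto
  have "open_fip F"
    unfolding open_fip_def
  proof (intro allI impI)
    fix G assume G: "G \<subseteq> F" "finite G"
    show "\<exists>x. \<forall>(a, b)\<in>G. x \<in> {a<..<b}"
    proof (cases "G = {}")
      case True thus ?thesis by auto
    next
      case False
      define m where "m = Min (snd ` G)"
      have "\<forall>b\<in>snd ` G. 0 < b" using G Fpos by fastforce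
      hence mpos: "0 < m" unfolding m_def using G False
        by (subst Min_gr_iff) auto
      have "\<forall>(a,b)\<in>G. (m/2) \<in> {a<..<b}"
      proof (clarify)
        fix a b assume ab: "(a,b) \<in> G"
        hence "b \<in> snd ` G" by (rule rev_image_eqI) simp
        hence "m \<le> b" unfolding m_def using G(2) by simp
        moreover have "a = 0" using ab G Fpos by auto
        ultimately show "m/2 \<in> {a<..<b}" using mpos by auto
      qed
      thus ?thesis by blast
    qed
  qed
  then obtain x where x: "\<forall>(a,b)\<in>F. x \<in> {a<..<b}"
    using sat cF unfolding alg_saturated_def by blast
  obtain a0 where "a0 \<in> P" using False P_def by auto
  hence xpos: "0 < x" using x unfolding F_def by auto
  have "\<forall>a\<in>A. a \<le> inverse x"
  proof
    fix a assume a: "a \<in> A"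
    show "a \<le> inverse x"
    proof (cases "0 < a")
      case True
      hence "(0, inverse a) \<in> F" unfolding F_def P_def using a by auto
      hence "x < inverse a" using x by auto
      hence "inverse (inverse a) < inverse x" using xpos
        by (rule less_imp_inverse_less)
      thus ?thesis using True by simp
    next
      case False
      moreover have "0 < inverse x" using xpos by simp
      ultimately show ?thesis by linarith
    qed
  qed
  thus ?thesis unfolding bdd_above_def by blast
qed

lemma sat_inf:
  assumes sat: "alg_saturated \<kappa> TYPE('a::linordered_field)"
  shows "alg_saturated_at_infinity \<kappa> TYPE('a)"
  unfolding alg_saturated_at_infinity_def
proof (intro allI impI conjI)
  fix A :: "'a set" assume c: "( |A|, \<kappa>) \<in> ordLess"
  show "bdd_above A" using sat_bdd_above[OF sat c] .
  have "bdd_above (uminus ` A)" using sat_bdd_above[OF sat image_less[OF c]] .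
  thus "bdd_below A" by simp
qed

lemma sat_cantor:
  assumes sat: "alg_saturated \<kappa> TYPE('a::linordered_field)"
  shows "cantor_complete \<kappa> TYPE('a)"
  unfolding cantor_complete_def
proof (intro allI impI)
  fix F :: "('a \<times> 'a) set"
  assume cF: "( |F|, \<kappa>) \<in> ordLess" and fip: "closed_fip F"
  have cross: "a \<le> d" if "(a,b) \<in> F" "(c,d) \<in> F" for a b c d
  proof -
    have "{(a,b),(c,d)} \<subseteq> F" "finite {(a,b),(c,d)}" using that by auto
    then obtain x where "\<forall>(a',b')\<in>{(a,b),(c,d)}. x \<in> {a'..b'}"
      using fip unfolding closed_fip_def by blast
    thus ?thesis by auto
  qed
  show "\<exists>x. \<forall>(a, b)\<in>F. x \<in> {a..b}"
  proof (cases "\<exists>p\<in>F. \<forall>q\<in>F. fst q \<le> fst p")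
    case True
    then obtain a0 b0 where p: "(a0,b0) \<in> F" "\<forall>q\<in>F. fst q \<le> a0" by auto
    have "\<forall>(a,b)\<in>F. a0 \<in> {a..b}"
    proof clarify
      fix a b assume ab: "(a,b) \<in> F"
      have "a \<le> a0" using p(2) ab by force
      moreover have "a0 \<le> b" using cross[OF p(1) ab] .
      ultimately show "a0 \<in> {a..b}" by simp
    qed
    thus ?thesis by blast
  next
    case False
    hence nomax: "\<forall>p\<in>F. \<exists>q\<in>F. fst p < fst q" by (auto simp: not_le)
    have "open_fip F" unfolding open_fip_def
    proof (intro allI impI)
      fix G assume G: "G \<subseteq> F" "finite G"
      show "\<exists>x. \<forall>(a, b)\<in>G. x \<in> {a<..<b}"
      proof (cases "G = {}")
        case True thus ?thesis by auto
      next
        case False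
        define am where "am = Max (fst ` G)"
        define bm where "bm = Min (snd ` G)"
        have "am \<in> fst ` G" unfolding am_def using G False by simp
        then obtain p where p: "p \<in> G" "fst p = am" by auto
        have "bm \<in> snd ` G" unfolding bm_def using G False by simp
        then obtain r where r: "r \<in> G" "snd r = bm" by auto
        have "p \<in> F" using p G by blast
        with nomax obtain q where q: "q \<in> F" "am < fst q" using p(2) by blast
        have "fst q \<le> snd r" using cross[of "fst q" "snd q" "fst r" "snd r"] q r G by auto
        hence lt: "am < bm" using q r by auto
        have "\<forall>(a,b)\<in>G. (am+bm)/2 \<in> {a<..<b}"
        proof clarify
          fix a b assume ab: "(a,b) \<in> G"
          have "a \<in> fst ` G" using ab by (rule rev_image_eqI) simp
          hence "a \<le> am" unfolding am_def using G(2) by simp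
          moreover have "b \<in> snd ` G" using ab by (rule rev_image_eqI) simp
          hence "bm \<le> b" unfolding bm_def using G(2) by simp
          moreover have "am < (am+bm)/2" "(am+bm)/2 < bm" using lt by (simp_all add: field_simps)
          ultimately show "(am+bm)/2 \<in> {a<..<b}" by simp
        qed
        thus ?thesis by blast
      qed
    qed
    then obtain x where "\<forall>(a,b)\<in>F. x \<in> {a<..<b}"
      using sat cF unfolding alg_saturated_def by blast
    hence "\<forall>(a,b)\<in>F. x \<in> {a..b}" by auto
    thus ?thesis by blast
  qed
qed

lemma cantor_sat:
  assumes nat: "(natLeq, \<kappa>) \<in> ordLess"
    and cc: "cantor_complete \<kappa> TYPE('a::linordered_field)"
    and inf: "alg_saturated_at_infinity \<kappa> TYPE('a)"
  shows "alg_saturated \<kappa> TYPE('a)"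
  unfolding alg_saturated_def
proof (intro allI impI)
  fix F :: "('a \<times> 'a) set"
  assume cF: "( |F|, \<kappa>) \<in> ordLess" and fip: "open_fip F"
  have cross: "a < d" if "(a,b) \<in> F" "(c,d) \<in> F" for a b c d
  proof -
    have "{(a,b),(c,d)} \<subseteq> F" "finite {(a,b),(c,d)}" using that by auto
    then obtain x where "\<forall>(a',b')\<in>{(a,b),(c,d)}. x \<in> {a'<..<b'}"
      using fip unfolding open_fip_def by blast
    thus ?thesis by auto
  qed
  define S where "S = (\<lambda>(p,q). inverse (snd q - fst p)) ` (F \<times> F)"
  have cS: "( |S|, \<kappa>) \<in> ordLess" unfolding S_def
    by (rule image_less[OF times_less[OF nat cF]])
  have "bdd_above S" using inf[unfolded alg_saturated_at_infinity_def, rule_format, OF cS] by (rule conjunct1)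
  then obtain M where M: "\<forall>s\<in>S. s \<le> M" unfolding bdd_above_def by blast
  define M' where "M' = max M 1"
  define e where "e = inverse M'"
  have M'pos: "0 < M'" unfolding M'_def by simp
  have epos: "0 < e" unfolding e_def using M'pos by simp
  have gap: "e \<le> d - a" if "(a,b) \<in> F" "(c,d) \<in> F" for a b c d
  proof -
    have "((a,b),(c,d)) \<in> F \<times> F" using that by simp
    hence "inverse (d - a) \<in> S" unfolding S_def
      by (rule rev_image_eqI) simp
    hence "inverse (d - a) \<le> M'" using M unfolding M'_def by fastforce
    moreover have "0 < inverse (d - a)" using cross[OF that] by simp
    ultimately have "inverse M' \<le> inverse (inverse (d - a))"
      by (rule le_imp_inverse_le)
    thus ?thesis unfolding e_def by simp
  qed
  define F' where "F' = (\<lambda>(a,b). (a + e/2, b - e/2)) ` F"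
  have cF': "( |F'|, \<kappa>) \<in> ordLess" unfolding F'_def by (rule image_less[OF cF])
  have "closed_fip F'" unfolding closed_fip_def
  proof (intro allI impI)
    fix G assume G: "G \<subseteq> F'" "finite G"
    show "\<exists>x. \<forall>(a, b)\<in>G. x \<in> {a..b}"
    proof (cases "G = {}")
      case True thus ?thesis by auto
    next
      case False
      define am where "am = Max (fst ` G)"
      define bm where "bm = Min (snd ` G)"
      have "am \<in> fst ` G" unfolding am_def using G False by simp
      then obtain p where p: "p \<in> G" "fst p = am" by auto
      have "bm \<in> snd ` G" unfolding bm_def using G False by simp
      then obtain r where r: "r \<in> G" "snd r = bm" by auto
      obtain a1 b1 where 1: "(a1,b1) \<in> F" "p = (a1 + e/2, b1 - e/2)" using p G unfolding F'_def by auto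
      obtain a2 b2 where 2: "(a2,b2) \<in> F" "r = (a2 + e/2, b2 - e/2)" using r G unfolding F'_def by auto
      have "e \<le> b2 - a1" using gap 1 2 by blast
      hence lt: "am \<le> bm" using p r 1 2 by auto
      have "\<forall>(a,b)\<in>G. am \<in> {a..b}"
      proof clarify
        fix a b assume ab: "(a,b) \<in> G"
        have "a \<in> fst ` G" using ab by (rule rev_image_eqI) simp
          hence "a \<le> am" unfolding am_def using G(2) by simp
        moreover have "b \<in> snd ` G" using ab by (rule rev_image_eqI) simp
          hence "bm \<le> b" unfolding bm_def using G(2) by simp
        ultimately show "am \<in> {a..b}" using lt by auto
      qed
      thus ?thesis by blast
    qed
  qed
  then obtain x where x: "\<forall>(a,b)\<in>F'. x \<in> {a..b}"
    using cc cF' unfolding cantor_complete_def by blast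
  have "\<forall>(a,b)\<in>F. x \<in> {a<..<b}"
  proof clarify
    fix a b assume "(a,b) \<in> F"
    hence "(a + e/2, b - e/2) \<in> F'" unfolding F'_def by (rule rev_image_eqI) simp
    hence "a + e/2 \<le> x" "x \<le> b - e/2" using x by auto
    thus "x \<in> {a<..<b}" using epos by auto
  qed
  thus "\<exists>x. \<forall>(a,b)\<in>F. x \<in> {a<..<b}" by blast
qed

theorem mainTheorem16:
  fixes \<kappa> :: "'b rel"
  assumes "Card_order \<kappa>" and "(natLeq, \<kappa>) \<in> ordLess"
  shows "alg_saturated \<kappa> TYPE('a::linordered_field) \<longleftrightarrow>
           cantor_complete \<kappa> TYPE('a) \<and> alg_saturated_at_infinity \<kappa> TYPE('a)"
  using sat_inf sat_cantor cantor_sat[OF assms(2)] by blast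

end
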